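(* Let $T$ be the regular rooted tree of valence $p\geq 2$ with the embedded wire diffeology $\mathcal{D}_T$, and equip $\operatorname{Aut}T$ with the functional diffeology. Then the D-topology of $\operatorname{Aut}T$ with respect to this diffeology is the discrete topology.
   Context: Fix a finite alphabet $A$ with $|A|=p\geq 2$. The vertices of $T$ are the finite words over $A$ (the root is the empty word); two vertices are joined by an edge iff they have the form $a_1\dots a_n$ and $a_1\dots a_na_{n+1}$. As a topological space, $T$ is the 1-dimensional CW complex obtained by realizing each edge as a copy of $[0,1]$, with its usual topology. $\operatorname{Aut}T$ is the group of bijections of the vertex set fixing the root and preserving adjacency; each is regarded as a homeomorphism of the geometric realization mapping each edge affinely onto its image edge. A diffeology on a set $X$ is a collection of maps $U\to X$ ("plots"), $U$ ranging over open subsets of all $\mathbb{R}^n$, containing all constant maps, closed under precomposition with smooth maps, and satisfying the sheaf condition. The embedded wire diffeology $\mathcal{D}_T$ is the diffeology on $T$ generated by (i.e. the smallest diffeology containing) all maps $\gamma:\mathbb{R}\to T$ that are injective, continuous, and homeomorphisms onto their images. A map between diffeological spaces is smooth if it sends plots to plots. The functional diffeology on $C^\infty(T,T)$ is the coarsest diffeology such that the evaluation map $C^\infty(T,T)\times T\to T$ is smooth (with the product diffeology, the coarsest making projections smooth); $\operatorname{Aut}T\subseteq C^\infty(T,T)$ carries the subset diffeology. The D-topology of a diffeological space $X$ is the topology in which $S\subseteq X$ is open iff $P^{-1}(S)$ is open for every plot $P$ of $X$. *)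

theory Defs
  imports "HOL-Analysis.Analysis"
begin

text \<open>R^n is encoded as the functions nat => real vanishing at coordinates >= n.\<close>

definition Esp :: "nat \<Rightarrow> (nat \<Rightarrow> real) set" where
  "Esp n = {x. \<forall>i\<ge>n. x i = 0}"

definition edist :: "nat \<Rightarrow> (nat \<Rightarrow> real) \<Rightarrow> (nat \<Rightarrow> real) \<Rightarrow> real" where
  "edist n x y = sqrt (\<Sum>i<n. (x i - y i)^2)"

definition Eopen :: "nat \<Rightarrow> (nat \<Rightarrow> real) set \<Rightarrow> bool" where
  "Eopen n U \<longleftrightarrow> U \<subseteq> Esp n \<and>
     (\<forall>x\<in>U. \<exists>e>0. \<forall>y\<in>Esp n. edist n x y < e \<longrightarrow> y \<in> U)"

definition Econt :: "nat \<Rightarrow> (nat \<Rightarrow> real) set \<Rightarrow> ((nat \<Rightarrow> real) \<Rightarrow> real) \<Rightarrow> bool" where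
  "Econt n U g \<longleftrightarrow>
     (\<forall>x\<in>U. \<forall>e>0. \<exists>d>0. \<forall>y\<in>U. edist n x y < d \<longrightarrow> \<bar>g y - g x\<bar> < e)"

fun Ck :: "nat \<Rightarrow> nat \<Rightarrow> (nat \<Rightarrow> real) set \<Rightarrow> ((nat \<Rightarrow> real) \<Rightarrow> real) \<Rightarrow> bool" where
  "Ck 0 n U g = Econt n U g"
| "Ck (Suc k) n U g =
     (Econt n U g \<and>
      (\<forall>i<n. (\<forall>x\<in>U. (\<lambda>t. g (x(i := x i + t))) differentiable (at 0)) \<and>
             Ck k n U (\<lambda>x. deriv (\<lambda>t. g (x(i := x i + t))) 0)))"

definition Esmooth_real :: "nat \<Rightarrow> (nat \<Rightarrow> real) set \<Rightarrow> ((nat \<Rightarrow> real) \<Rightarrow> real) \<Rightarrow> bool" where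
  "Esmooth_real n U g \<longleftrightarrow> (\<forall>k. Ck k n U g)"

definition Esmooth :: "nat \<Rightarrow> (nat \<Rightarrow> real) set \<Rightarrow> nat \<Rightarrow> (nat \<Rightarrow> real) set
                       \<Rightarrow> ((nat \<Rightarrow> real) \<Rightarrow> (nat \<Rightarrow> real)) \<Rightarrow> bool" where
  "Esmooth m V n U F \<longleftrightarrow> Eopen m V \<and> Eopen n U \<and> F ` V \<subseteq> U \<and>
     (\<forall>j<n. Esmooth_real m V (\<lambda>x. F x j))"

text \<open>A parametrization: dimension n, open domain U of R^n, map (relevant on U only).\<close>
type_synonym 'x plot = "nat \<times> (nat \<Rightarrow> real) set \<times> ((nat \<Rightarrow> real) \<Rightarrow> 'x)"

definition diffeology :: "'x set \<Rightarrow> 'x plot set \<Rightarrow> bool" where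
  "diffeology X D \<longleftrightarrow>
     (\<forall>n U P. (n, U, P) \<in> D \<longrightarrow> Eopen n U \<and> P ` U \<subseteq> X) \<and>
     (\<forall>n U P Q. (n, U, P) \<in> D \<and> (\<forall>x\<in>U. P x = Q x) \<longrightarrow> (n, U, Q) \<in> D) \<and>
     (\<forall>n U c. Eopen n U \<and> c \<in> X \<longrightarrow> (n, U, \<lambda>_. c) \<in> D) \<and>
     (\<forall>n U P m V F. (n, U, P) \<in> D \<and> Esmooth m V n U F \<longrightarrow> (m, V, P \<circ> F) \<in> D) \<and>
     (\<forall>n U P. Eopen n U \<and> P ` U \<subseteq> X \<and>
        (\<forall>x\<in>U. \<exists>V. Eopen n V \<and> x \<in> V \<and> V \<subseteq> U \<and> (n, V, P) \<in> D)
        \<longrightarrow> (n, U, P) \<in> D)"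

definition gen_diffeology :: "'x set \<Rightarrow> 'x plot set \<Rightarrow> 'x plot set" where
  "gen_diffeology X G = \<Inter>{D. diffeology X D \<and> G \<subseteq> D}"

definition dsmooth :: "'x set \<Rightarrow> 'x plot set \<Rightarrow> 'y set \<Rightarrow> 'y plot set \<Rightarrow> ('x \<Rightarrow> 'y) \<Rightarrow> bool" where
  "dsmooth X D Y D' f \<longleftrightarrow> f ` X \<subseteq> Y \<and> (\<forall>n U P. (n, U, P) \<in> D \<longrightarrow> (n, U, f \<circ> P) \<in> D')"

definition prod_diffeology :: "'x plot set \<Rightarrow> 'y plot set \<Rightarrow> ('x \<times> 'y) plot set" where
  "prod_diffeology D1 D2 = {(n, U, P). (n, U, fst \<circ> P) \<in> D1 \<and> (n, U, snd \<circ> P) \<in> D2}"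

definition Cinf :: "'x set \<Rightarrow> 'x plot set \<Rightarrow> 'y set \<Rightarrow> 'y plot set \<Rightarrow> ('x \<Rightarrow> 'y) set" where
  "Cinf X D Y D' = {f \<in> extensional X. dsmooth X D Y D' f}"

text \<open>Functional diffeology: the coarsest (largest) diffeology on C^infty(X,Y) making
  evaluation smooth; as the greatest such diffeology exists, it is the union of all of them.\<close>
definition functional_diffeology :: "'x set \<Rightarrow> 'x plot set \<Rightarrow> 'y set \<Rightarrow> 'y plot set
                                      \<Rightarrow> ('x \<Rightarrow> 'y) plot set" where
  "functional_diffeology X D Y D' =
     \<Union>{E. diffeology (Cinf X D Y D') E \<and>
          dsmooth (Cinf X D Y D' \<times> X) (prod_diffeology E D) Y D' (\<lambda>(f, x). f x)}"

definition subset_diffeology :: "'x plot set \<Rightarrow> 'x set \<Rightarrow> 'x plot set" where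
  "subset_diffeology D A = {(n, U, P). (n, U, P) \<in> D \<and> P ` U \<subseteq> A}"

definition D_open :: "'x plot set \<Rightarrow> 'x set \<Rightarrow> bool" where
  "D_open D S \<longleftrightarrow> (\<forall>n U P. (n, U, P) \<in> D \<longrightarrow> Eopen n {x \<in> U. P x \<in> S})"

text \<open>A point of the realization is either the root ([],0)
  or (w,t) with w nonempty, 0 < t <= 1: the point of the edge from butlast w to w at
  distance t from butlast w; (w,1) is the vertex w.\<close>

definition tree_pts :: "('a list \<times> real) set" where
  "tree_pts = {([], 0)} \<union> {(w, t). w \<noteq> [] \<and> 0 < t \<and> t \<le> 1}"

definition vertex_pt :: "'a list \<Rightarrow> 'a list \<times> real" where
  "vertex_pt v = (if v = [] then ([], 0) else (v, 1))"

text \<open>Characteristic map of the edge from parent u to child w (parameter s in [0,1]).\<close>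
definition edge_pt :: "'a list \<Rightarrow> 'a list \<Rightarrow> real \<Rightarrow> 'a list \<times> real" where
  "edge_pt u w s = (if s = 0 then vertex_pt u else (w, s))"

definition tree_top :: "('a list \<times> real) topology" where
  "tree_top = topology (\<lambda>S. S \<subseteq> tree_pts \<and>
     (\<forall>w. w \<noteq> [] \<longrightarrow>
        openin (top_of_set {0..1::real}) {s \<in> {0..1}. edge_pt (butlast w) w s \<in> S}))"

definition tadj :: "'a list \<Rightarrow> 'a list \<Rightarrow> bool" where
  "tadj u v \<longleftrightarrow> (\<exists>a. v = u @ [a]) \<or> (\<exists>a. u = v @ [a])"

definition is_tree_aut :: "('a list \<Rightarrow> 'a list) \<Rightarrow> bool" where
  "is_tree_aut \<sigma> \<longleftrightarrow> bij \<sigma> \<and> \<sigma> [] = [] \<and> (\<forall>u v. tadj u v \<longleftrightarrow> tadj (\<sigma> u) (\<sigma> v))"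

text \<open>Realization of a vertex map: the edge {butlast w, w} is mapped affinely onto the
  edge {sigma (butlast w), sigma w}, sending the endpoint butlast w to sigma (butlast w).\<close>
definition realize :: "('a list \<Rightarrow> 'a list) \<Rightarrow> 'a list \<times> real \<Rightarrow> 'a list \<times> real" where
  "realize \<sigma> p = (case p of (w, t) \<Rightarrow>
     (if w = [] then vertex_pt (\<sigma> [])
      else (let u' = \<sigma> (butlast w); w' = \<sigma> w in
            if w' \<noteq> [] \<and> butlast w' = u' then edge_pt u' w' t
            else edge_pt w' u' (1 - t))))"

definition AutT :: "('a list \<times> real \<Rightarrow> 'a list \<times> real) set" where
  "AutT = {restrict (realize \<sigma>) tree_pts | \<sigma>. is_tree_aut \<sigma>}"

definition wire :: "(real \<Rightarrow> 'a list \<times> real) \<Rightarrow> bool" where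
  "wire \<gamma> \<longleftrightarrow> inj \<gamma> \<and> continuous_map euclideanreal tree_top \<gamma> \<and>
     homeomorphic_map euclideanreal (subtopology tree_top (range \<gamma>)) \<gamma>"

definition wire_diffeology :: "('a list \<times> real) plot set" where
  "wire_diffeology = gen_diffeology tree_pts
     {(1, Esp 1, \<lambda>x. \<gamma> (x 0)) | \<gamma>. wire \<gamma>}"

definition AutT_diffeology :: "('a list \<times> real \<Rightarrow> 'a list \<times> real) plot set" where
  "AutT_diffeology = subset_diffeology
     (functional_diffeology tree_pts wire_diffeology tree_pts wire_diffeology) AutT"

end

theory Submission imports Defs begin

lemma tree_top_istop: "istopology (\<lambda>S. S \<subseteq> tree_pts \<and>
     (\<forall>w. w \<noteq> [] \<longrightarrow>
        openin (top_of_set {0..1::real}) {s \<in> {0..1}. edge_pt (butlast w) w s \<in> S}))"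
proof -
  have i: "{s \<in> {0..1::real}. edge_pt (butlast w) w s \<in> S \<inter> T} = {s \<in> {0..1}. edge_pt (butlast w) w s \<in> S} \<inter> {s \<in> {0..1}. edge_pt (butlast w) w s \<in> T}" for S T and w :: "'a list" by blast
  have u: "{s \<in> {0..1::real}. edge_pt (butlast w) w s \<in> \<Union>K} = (\<Union>S\<in>K. {s \<in> {0..1}. edge_pt (butlast w) w s \<in> S})" for K and w :: "'a list" by blast
  show ?thesis unfolding istopology_def
    apply (intro conjI allI impI)
    subgoal by blast
    subgoal for S T w unfolding i by (intro openin_Int) auto
    subgoal by blast
    subgoal for K w unfolding u by (intro openin_Union) auto
    done
qed

lemma openin_tree_top: "openin tree_top S \<longleftrightarrow> S \<subseteq> tree_pts \<and>
     (\<forall>w. w \<noteq> [] \<longrightarrow>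
        openin (top_of_set {0..1::real}) {s \<in> {0..1}. edge_pt (butlast w) w s \<in> S})"
  unfolding tree_top_def by (subst topology_inverse'[OF tree_top_istop]) (rule refl)

lemma topspace_tree_top: "topspace tree_top \<subseteq> tree_pts"
  unfolding topspace_def using openin_tree_top by blast

lemma vertex_pt_in: "vertex_pt v \<in> tree_pts"
  by (simp add: vertex_pt_def tree_pts_def)

lemma vertex_pt_inj: "vertex_pt a = vertex_pt b \<Longrightarrow> a = b"
  by (auto simp: vertex_pt_def split: if_splits)

definition Nc :: "('a list \<times> real) \<Rightarrow> ('a list \<times> real) set" where
  "Nc c = insert c (tree_pts - range vertex_pt)"

lemma open_Nc: "openin tree_top (Nc (vertex_pt v))"
  unfolding openin_tree_top
proof (intro conjI allI impI)
  show "Nc (vertex_pt v) \<subseteq> tree_pts" using vertex_pt_in by (auto simp: Nc_def)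
  fix w :: "'a list" assume w: "w \<noteq> []"
  define Pre where "Pre = {s \<in> {0..1::real}. edge_pt (butlast w) w s \<in> Nc (vertex_pt v)}"
  have mid: "{0<..<1} \<subseteq> Pre"
  proof
    fix s :: real assume s: "s \<in> {0<..<1}"
    have "(w, s) \<notin> range vertex_pt" using s by (auto simp: vertex_pt_def split: if_splits)
    moreover have "(w,s) \<in> tree_pts" using s w by (auto simp: tree_pts_def)
    moreover have "edge_pt (butlast w) w s = (w, s)" using s by (simp add: edge_pt_def)
    ultimately show "s \<in> Pre" using s by (simp add: Pre_def Nc_def)
  qed
  have eq: "Pre = {0..1} - ({0,1} - Pre)"
  proof
    show "Pre \<subseteq> {0..1} - ({0,1} - Pre)" by (auto simp: Pre_def)
    show "{0..1} - ({0,1} - Pre) \<subseteq> Pre"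
    proof
      fix x assume "x \<in> {0..1::real} - ({0,1} - Pre)"
      then have "x \<in> Pre \<or> x \<in> {0<..<1}" by auto
      then show "x \<in> Pre" using mid by blast
    qed
  qed
  have "closedin (top_of_set {0..1::real}) ({0,1} - Pre)"
    unfolding closedin_closed by (rule exI[of _ "{0,1} - Pre"]) (auto intro: finite_imp_closed)
  then have "openin (top_of_set {0..1::real}) ({0..1} - ({0,1} - Pre))"
    by (intro openin_diff) auto
  then show "openin (top_of_set {0..1}) {s \<in> {0..1}. edge_pt (butlast w) w s \<in> Nc (vertex_pt v)}"
    using eq by (simp add: Pre_def)
qed

definition Dc :: "('a list \<times> real) plot set" where
 "Dc = {(n,U,R). Eopen n U \<and> R ` U \<subseteq> tree_pts \<and>
     (\<forall>x\<in>U. R x \<in> range vertex_pt \<longrightarrow> (\<exists>e>0. \<forall>y\<in>U. edist n x y < e \<longrightarrow> R y \<in> Nc (R x)))}"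

lemma edist_sym: "edist n x y = edist n y x"
  unfolding edist_def by (simp add: power2_commute)

lemma sum_cont:
  fixes n :: nat and g :: "nat \<Rightarrow> (nat \<Rightarrow> real) \<Rightarrow> real"
  assumes "\<forall>j<n. Econt m V (g j)" "x \<in> V" "(e::real) > 0"
  shows "\<exists>d>0. \<forall>y\<in>V. edist m x y < d \<longrightarrow> (\<Sum>j<n. \<bar>g j y - g j x\<bar>) < e"
  using assms
proof (induction n arbitrary: e)
  case 0
  then show ?case by (intro exI[of _ 1]) auto
next
  case (Suc n)
  then obtain d1 where d1: "d1 > 0" "\<forall>y\<in>V. edist m x y < d1 \<longrightarrow> (\<Sum>j<n. \<bar>g j y - g j x\<bar>) < e/2"
    by (metis half_gt_zero less_SucI)
  have "Econt m V (g n)" using Suc.prems by auto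
  then obtain d2 where d2: "d2 > 0" "\<forall>y\<in>V. edist m x y < d2 \<longrightarrow> \<bar>g n y - g n x\<bar> < e/2"
    unfolding Econt_def using Suc.prems by (meson half_gt_zero)
  show ?case
  proof (intro exI[of _ "min d1 d2"] conjI ballI impI)
    show "min d1 d2 > 0" using d1 d2 by simp
    fix y assume "y \<in> V" "edist m x y < min d1 d2"
    then have "(\<Sum>j<n. \<bar>g j y - g j x\<bar>) < e/2" "\<bar>g n y - g n x\<bar> < e/2" using d1 d2 by auto
    then show "(\<Sum>j<Suc n. \<bar>g j y - g j x\<bar>) < e" by simp
  qed
qed

lemma edist_le_sum: "edist n a b \<le> (\<Sum>j<n. \<bar>a j - b j\<bar>)"
proof -
  have "edist n a b = L2_set (\<lambda>i. a i - b i) {..<n}" by (simp add: edist_def L2_set_def)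
  also have "\<dots> \<le> (\<Sum>j<n. \<bar>a j - b j\<bar>)" by (rule L2_set_le_sum_abs)
  finally show ?thesis .
qed

lemma F_cont:
  assumes "Esmooth m V n U F" "x \<in> V" "e > 0"
  shows "\<exists>d>0. \<forall>y\<in>V. edist m x y < d \<longrightarrow> edist n (F x) (F y) < e"
proof -
  have "\<forall>j<n. Econt m V (\<lambda>x. F x j)"
    using assms(1) unfolding Esmooth_def Esmooth_real_def by (metis Ck.simps(1))
  from sum_cont[OF this assms(2,3)] obtain d where d: "d > 0"
    "\<forall>y\<in>V. edist m x y < d \<longrightarrow> (\<Sum>j<n. \<bar>F y j - F x j\<bar>) < e" by blast
  show ?thesis
  proof (intro exI[of _ d] conjI ballI impI)
    fix y assume "y \<in> V" "edist m x y < d"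
    then have "(\<Sum>j<n. \<bar>F y j - F x j\<bar>) < e" using d by auto
    moreover have "edist n (F x) (F y) \<le> (\<Sum>j<n. \<bar>F y j - F x j\<bar>)"
      using edist_le_sum[of n "F x" "F y"] by (simp add: abs_minus_commute)
    ultimately show "edist n (F x) (F y) < e" by linarith
  qed (use d in auto)
qed

lemma Dc_diffeology: "diffeology tree_pts Dc"
  unfolding diffeology_def
proof (intro conjI allI impI)
  fix n U P assume "(n, U, P) \<in> Dc" then show "Eopen n U" by (auto simp: Dc_def)
next
  fix n U P assume "(n, U, P) \<in> Dc" then show "P ` U \<subseteq> tree_pts" by (auto simp: Dc_def)
next
  fix n U P Q assume a: "(n, U, P) \<in> Dc \<and> (\<forall>x\<in>U. P x = Q x)"
  then have PQ: "\<forall>x\<in>U. Q x = P x" by simp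
  from a have "(n, U, P) \<in> Dc" by blast
  then have P: "Eopen n U" "P ` U \<subseteq> tree_pts"
    "\<forall>x\<in>U. P x \<in> range vertex_pt \<longrightarrow> (\<exists>e>0. \<forall>y\<in>U. edist n x y < e \<longrightarrow> P y \<in> Nc (P x))"
    by (auto simp: Dc_def)
  show "(n, U, Q) \<in> Dc" unfolding Dc_def
  proof (simp only: Dc_def mem_Collect_eq prod.case image_subset_iff comp_apply, intro conjI ballI impI)
    show "Eopen n U" by fact
    show "Q x \<in> tree_pts" if "x \<in> U" for x using that P PQ by auto
    fix x assume x: "x \<in> U" "Q x \<in> range vertex_pt"
    have "P x \<in> range vertex_pt" using x PQ by simp
    then obtain e where e: "e > 0" "\<forall>y\<in>U. edist n x y < e \<longrightarrow> P y \<in> Nc (P x)" using P(3) x(1) by blast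
    show "\<exists>e>0. \<forall>y\<in>U. edist n x y < e \<longrightarrow> Q y \<in> Nc (Q x)"
    proof (intro exI[of _ e] conjI ballI impI)
      show "e > 0" by fact
      fix y assume y: "y \<in> U" "edist n x y < e"
      then have "P y \<in> Nc (P x)" using e by blast
      then show "Q y \<in> Nc (Q x)" using PQ x(1) y(1) by simp
    qed
  qed
next
  fix n U and c :: "'a list \<times> real" assume "Eopen n U \<and> c \<in> tree_pts"
  then show "(n, U, \<lambda>_. c) \<in> Dc" unfolding Dc_def Nc_def
    by (auto intro: exI[of _ 1])
next
  fix n U P m V F assume a: "(n, U, P) \<in> Dc \<and> Esmooth m V n U F"
  then have P: "Eopen n U" "P ` U \<subseteq> tree_pts"
    "\<forall>x\<in>U. P x \<in> range vertex_pt \<longrightarrow> (\<exists>e>0. \<forall>y\<in>U. edist n x y < e \<longrightarrow> P y \<in> Nc (P x))"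
    by (auto simp: Dc_def)
  have F: "Eopen m V" "F ` V \<subseteq> U" using a by (auto simp: Esmooth_def)
  show "(m, V, P \<circ> F) \<in> Dc" unfolding Dc_def
  proof (simp only: Dc_def mem_Collect_eq prod.case image_subset_iff comp_apply, intro conjI ballI impI)
    show "Eopen m V" by fact
    show "P (F x) \<in> tree_pts" if "x \<in> V" for x using that F P by auto
    fix x assume x: "x \<in> V" "P (F x) \<in> range vertex_pt"
    then obtain e where e: "e > 0" "\<forall>y\<in>U. edist n (F x) y < e \<longrightarrow> P y \<in> Nc (P (F x))"
      using P F by blast
    obtain d where d: "d > 0" "\<forall>y\<in>V. edist m x y < d \<longrightarrow> edist n (F x) (F y) < e"
      using F_cont[OF conjunct2[OF a] x(1) e(1)] by blast
    show "\<exists>e>0. \<forall>y\<in>V. edist m x y < e \<longrightarrow> P (F y) \<in> Nc (P (F x))"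
      using d e F by (intro exI[of _ d]) auto
  qed
next
  fix n U P assume a: "Eopen n U \<and> P ` U \<subseteq> tree_pts \<and> (\<forall>x\<in>U. \<exists>V. Eopen n V \<and> x \<in> V \<and> V \<subseteq> U \<and> (n, V, P) \<in> Dc)"
  show "(n, U, P) \<in> Dc" unfolding Dc_def
  proof (simp only: Dc_def mem_Collect_eq prod.case image_subset_iff comp_apply, intro conjI ballI impI)
    show "Eopen n U" using a by blast
    show "P x \<in> tree_pts" if "x \<in> U" for x using that a by auto
    fix x assume x: "x \<in> U" "P x \<in> range vertex_pt"
    then obtain V where V: "Eopen n V" "x \<in> V" "V \<subseteq> U" "(n, V, P) \<in> Dc" using a by blast
    then obtain e where e: "e > 0" "\<forall>y\<in>V. edist n x y < e \<longrightarrow> P y \<in> Nc (P x)"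
      using x unfolding Dc_def by auto
    obtain e' where e': "e' > 0" "\<forall>y\<in>Esp n. edist n x y < e' \<longrightarrow> y \<in> V"
      using V unfolding Eopen_def by blast
    have "U \<subseteq> Esp n" using a unfolding Eopen_def by blast
    then show "\<exists>e>0. \<forall>y\<in>U. edist n x y < e \<longrightarrow> P y \<in> Nc (P x)"
      using e e' by (intro exI[of _ "min e e'"]) auto
  qed
qed

lemma Eopen_Esp: "Eopen n (Esp n)"
  unfolding Eopen_def by (auto intro: exI[of _ 1])

lemma edist_1: "edist 1 x y = \<bar>x 0 - y 0\<bar>"
  by (simp add: edist_def)

lemma gens_Dc: "{(1, Esp 1, \<lambda>x. \<gamma> (x 0)) | \<gamma>. wire \<gamma>} \<subseteq> (Dc :: ('a list \<times> real) plot set)"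
proof clarify
  fix \<gamma> :: "real \<Rightarrow> 'a list \<times> real" assume w: "wire \<gamma>"
  then have c: "continuous_map euclideanreal tree_top \<gamma>" by (simp add: wire_def)
  then have im: "\<gamma> s \<in> tree_pts" for s
    using continuous_map_image_subset_topspace topspace_tree_top by fastforce
  show "(1, Esp 1, \<lambda>x. \<gamma> (x 0)) \<in> Dc" unfolding Dc_def
  proof (simp only: Dc_def mem_Collect_eq prod.case image_subset_iff comp_apply, intro conjI ballI impI)
        show "Eopen 1 (Esp 1)" using Eopen_Esp[of 1] by simp
        show "\<gamma> (x 0) \<in> tree_pts" for x by (rule im)
    fix x :: "nat \<Rightarrow> real" assume "x \<in> Esp 1" "\<gamma> (x 0) \<in> range vertex_pt"
    then obtain v where v: "\<gamma> (x 0) = vertex_pt v" by blast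
    have "openin euclideanreal {s \<in> topspace euclideanreal. \<gamma> s \<in> Nc (vertex_pt v)}"
      using c open_Nc unfolding continuous_map_def by blast
    then have "open {s. \<gamma> s \<in> Nc (vertex_pt v)}" by simp
    moreover have "x 0 \<in> {s. \<gamma> s \<in> Nc (vertex_pt v)}" using v by (simp add: Nc_def)
    ultimately obtain e where e: "e > 0" "ball (x 0) e \<subseteq> {s. \<gamma> s \<in> Nc (vertex_pt v)}"
      by (meson openE)
    show "\<exists>e>0. \<forall>y\<in>Esp 1. edist 1 x y < e \<longrightarrow> \<gamma> (y 0) \<in> Nc (\<gamma> (x 0))"
    proof (intro exI[of _ e] conjI ballI impI)
      fix y assume "edist 1 x y < e"
      then have "y 0 \<in> ball (x 0) e" using edist_1[of x y] by (simp add: dist_real_def)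
      then show "\<gamma> (y 0) \<in> Nc (\<gamma> (x 0))" using e v by auto
    qed (use e in auto)
  qed
qed

lemma wire_Dc: "wire_diffeology \<subseteq> Dc"
  unfolding wire_diffeology_def gen_diffeology_def
  using Dc_diffeology gens_Dc by (intro Inter_lower) blast

lemma const_wire: "Eopen n U \<Longrightarrow> (n, U, \<lambda>_. vertex_pt v) \<in> wire_diffeology"
  unfolding wire_diffeology_def gen_diffeology_def
proof (rule InterI)
  fix X :: "('a list \<times> real) plot set" assume "Eopen n U" "X \<in> {D. diffeology tree_pts D \<and> {(1, Esp 1, \<lambda>x. \<gamma> (x 0)) | \<gamma>. wire \<gamma>} \<subseteq> D}"
  then have "diffeology tree_pts X" by simp
  then have "\<forall>n U c. Eopen n U \<and> c \<in> tree_pts \<longrightarrow> (n, U, \<lambda>_. c) \<in> X"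
    unfolding diffeology_def by blast
  then show "(n, U, \<lambda>_. vertex_pt v) \<in> X" using vertex_pt_in \<open>Eopen n U\<close> by blast
qed


lemma realize_vertex: "realize \<sigma> (vertex_pt v) = vertex_pt (\<sigma> v)"
  by (cases "v = []") (auto simp: realize_def vertex_pt_def edge_pt_def Let_def)

lemma AutT_elem: "f \<in> AutT \<Longrightarrow> \<exists>\<sigma>. f = restrict (realize \<sigma>) tree_pts"
  unfolding AutT_def by blast

lemma AutT_vertex: "f \<in> AutT \<Longrightarrow> \<exists>\<sigma>. \<forall>v. f (vertex_pt v) = vertex_pt (\<sigma> v)"
  using AutT_elem vertex_pt_in realize_vertex by (metis restrict_apply')

lemma edist_line:
  "edist n (\<lambda>i. x0 i + s * (y i - x0 i)) (\<lambda>i. x0 i + t * (y i - x0 i)) = \<bar>s - t\<bar> * edist n x0 y"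
proof -
  have "(\<Sum>i<n. ((x0 i + s * (y i - x0 i)) - (x0 i + t * (y i - x0 i)))^2) = (s - t)^2 * (\<Sum>i<n. (x0 i - y i)^2)"
    by (simp add: sum_distrib_left power2_eq_square algebra_simps)
  then show ?thesis unfolding edist_def by (simp add: real_sqrt_mult)
qed

lemma ball_const:
  assumes x0: "x0 \<in> Esp n" and r: "\<forall>y\<in>Esp n. edist n x0 y < r \<longrightarrow> y \<in> U"
  and loc: "\<forall>x\<in>U. \<exists>e>0. \<forall>y\<in>U. edist n x y < e \<longrightarrow> R y = R x"
  and y: "y \<in> Esp n" "edist n x0 y < r"
  shows "R y = R x0"
proof -
  define L where "L t = (\<lambda>i. x0 i + t * (y i - x0 i))" for t :: real
  define D where "D = edist n x0 y"
  have D0: "D \<ge> 0" unfolding D_def edist_def by (simp add: sum_nonneg)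
  have hL: "L t \<in> Esp n" for t using x0 y unfolding L_def Esp_def by auto
  have hd: "edist n (L s) (L t) = \<bar>s - t\<bar> * D" for s t
    unfolding L_def D_def by (rule edist_line)
  have L0: "L 0 = x0" and L1: "L 1 = y" unfolding L_def by auto
  have LU: "L t \<in> U" if "t \<in> {0..1}" for t
  proof -
    have "edist n x0 (L t) = \<bar>0 - t\<bar> * D" using hd[of 0 t] L0 by simp
    also have "\<dots> \<le> D" using that D0 by (simp add: mult_left_le_one_le)
    finally show ?thesis using r hL y(2) D_def by fastforce
  qed
  have "(\<lambda>t. R (L t)) constant_on {0..1}"
  proof (rule locally_constant_imp_constant)
    show "connected {0..1::real}" by simp
    fix a :: real assume a: "a \<in> {0..1}"
    then obtain e where e: "e > 0" "\<forall>z\<in>U. edist n (L a) z < e \<longrightarrow> R z = R (L a)"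
      using loc LU by blast
    show "\<exists>T. openin (top_of_set {0..1}) T \<and> a \<in> T \<and> (\<forall>x\<in>T. R (L x) = R (L a))"
    proof (intro exI[of _ "{0..1} \<inter> ball a (e / (D + 1))"] conjI ballI)
      show "openin (top_of_set {0..1}) ({0..1} \<inter> ball a (e / (D + 1)))"
        by (rule openin_open_Int) simp
      show "a \<in> {0..1} \<inter> ball a (e / (D + 1))" using a e D0 by simp
      fix t assume t: "t \<in> {0..1} \<inter> ball a (e / (D + 1))"
      then have td: "\<bar>a - t\<bar> < e / (D + 1)" by (simp add: dist_real_def)
      have "\<bar>a - t\<bar> * D \<le> \<bar>a - t\<bar> * (D + 1)" by (simp add: mult_left_mono)
      also have "\<dots> < e" using td D0 by (simp add: pos_less_divide_eq)
      finally have "edist n (L a) (L t) < e" using hd by simp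
      then show "R (L t) = R (L a)" using e LU t by blast
    qed
  qed
  then have "R (L 1) = R (L 0)" unfolding constant_on_def by force
  then show ?thesis using L0 L1 by simp
qed


theorem mainTheorem6:
  assumes "CARD('a::finite) \<ge> 2"
  shows "\<forall>S \<subseteq> (AutT :: ('a list \<times> real \<Rightarrow> 'a list \<times> real) set).
           D_open AutT_diffeology S"
proof (intro allI impI)
  fix S :: "('a list \<times> real \<Rightarrow> 'a list \<times> real) set"
  assume SA: "S \<subseteq> AutT"
  show "D_open AutT_diffeology S" unfolding D_open_def
  proof (intro allI impI)
    fix n U P assume nUP: "(n, U, P) \<in> (AutT_diffeology :: ('a list \<times> real \<Rightarrow> 'a list \<times> real) plot set)"
    then have PA: "P ` U \<subseteq> AutT"
      and PF: "(n, U, P) \<in> functional_diffeology tree_pts wire_diffeology tree_pts wire_diffeology"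
      by (auto simp: AutT_diffeology_def subset_diffeology_def)
    then obtain E where Ed: "diffeology (Cinf tree_pts wire_diffeology tree_pts wire_diffeology) E"
      and Es: "dsmooth (Cinf tree_pts wire_diffeology tree_pts wire_diffeology \<times> tree_pts)
                 (prod_diffeology E wire_diffeology) tree_pts wire_diffeology (\<lambda>(f, x). f x)"
      and PE: "(n, U, P) \<in> E"
      unfolding functional_diffeology_def by blast
    have "\<forall>n U P. (n, U, P) \<in> E \<longrightarrow> Eopen n U \<and> P ` U \<subseteq> Cinf tree_pts wire_diffeology tree_pts wire_diffeology"
      using Ed unfolding diffeology_def by (rule conjunct1)
    then have UO: "Eopen n U" using PE by blast
    have vert: "P x (vertex_pt v) \<in> range vertex_pt" if "x \<in> U" for x v
      using AutT_vertex[of "P x"] PA that by blast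
    have key: "\<exists>e>0. \<forall>y\<in>U. edist n x y < e \<longrightarrow> P y (vertex_pt v) = P x (vertex_pt v)"
      if x: "x \<in> U" for x v
    proof -
      define Q where "Q = (\<lambda>z. (P z, vertex_pt v :: 'a list \<times> real))"
      have "fst \<circ> Q = P" "snd \<circ> Q = (\<lambda>_. vertex_pt v)" unfolding Q_def by auto
      then have "(n, U, Q) \<in> prod_diffeology E wire_diffeology"
        unfolding prod_diffeology_def using PE const_wire[OF UO] by simp
      moreover have "\<forall>n U P. (n, U, P) \<in> prod_diffeology E wire_diffeology \<longrightarrow> (n, U, (\<lambda>(f, x). f x) \<circ> P) \<in> wire_diffeology"
        using Es unfolding dsmooth_def by (rule conjunct2)
      ultimately have "(n, U, (\<lambda>(f, x). f x) \<circ> Q) \<in> wire_diffeology"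
        by blast
      moreover have "(\<lambda>(f, x). f x) \<circ> Q = (\<lambda>z. P z (vertex_pt v))" unfolding Q_def by auto
      ultimately have "(n, U, \<lambda>z. P z (vertex_pt v)) \<in> wire_diffeology" by simp
      then have "(n, U, \<lambda>z. P z (vertex_pt v)) \<in> Dc" using wire_Dc by blast
      then obtain e where e: "e > 0" "\<forall>y\<in>U. edist n x y < e \<longrightarrow> P y (vertex_pt v) \<in> Nc (P x (vertex_pt v))"
        using x vert[OF x] unfolding Dc_def by auto
      show ?thesis
      proof (intro exI[of _ e] conjI ballI impI)
        show "e > 0" by fact
        fix y assume y: "y \<in> U" "edist n x y < e"
        then have "P y (vertex_pt v) \<in> Nc (P x (vertex_pt v))" using e by blast
        then show "P y (vertex_pt v) = P x (vertex_pt v)" using vert[OF y(1)] unfolding Nc_def by blast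
      qed
    qed
    have UE: "U \<subseteq> Esp n" using UO unfolding Eopen_def by blast
    have loc: "\<exists>r>0. \<forall>y\<in>Esp n. edist n x0 y < r \<longrightarrow> y \<in> U \<and> P y = P x0" if x0: "x0 \<in> U" for x0
    proof -
      obtain r where r: "r > 0" "\<forall>y\<in>Esp n. edist n x0 y < r \<longrightarrow> y \<in> U"
        using UO x0 unfolding Eopen_def by blast
      show ?thesis
      proof (intro exI[of _ r] conjI ballI impI)
        show "r > 0" by fact
        fix y assume y: "y \<in> Esp n" "edist n x0 y < r"
        then show "y \<in> U" using r by blast
        have eqv: "P y (vertex_pt v) = P x0 (vertex_pt v)" for v
          by (rule ball_const[where R = "\<lambda>z. P z (vertex_pt v)", OF _ r(2) _ y])
             (use x0 UE key in auto)
        obtain \<sigma>y where sy: "P y = restrict (realize \<sigma>y) tree_pts" using AutT_elem PA \<open>y \<in> U\<close> by blast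
        obtain \<sigma>0 where s0: "P x0 = restrict (realize \<sigma>0) tree_pts" using AutT_elem PA x0 by blast
        have "\<sigma>y v = \<sigma>0 v" for v
        proof -
          have "P y (vertex_pt v) = vertex_pt (\<sigma>y v)" by (simp add: sy vertex_pt_in realize_vertex)
          moreover have "P x0 (vertex_pt v) = vertex_pt (\<sigma>0 v)" by (simp add: s0 vertex_pt_in realize_vertex)
          ultimately show ?thesis using eqv[of v] vertex_pt_inj by metis
        qed
        then have "\<sigma>y = \<sigma>0" by blast
        then show "P y = P x0" using sy s0 by simp
      qed
    qed
    show "Eopen n {x \<in> U. P x \<in> S}" unfolding Eopen_def
    proof (intro conjI ballI)
      show "{x \<in> U. P x \<in> S} \<subseteq> Esp n" using UE by blast
      fix x assume "x \<in> {x \<in> U. P x \<in> S}"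
      then show "\<exists>e>0. \<forall>y\<in>Esp n. edist n x y < e \<longrightarrow> y \<in> {x \<in> U. P x \<in> S}"
      proof -
        assume xS: "x \<in> {x \<in> U. P x \<in> S}"
        then obtain r where r: "r > 0" "\<forall>y\<in>Esp n. edist n x y < r \<longrightarrow> y \<in> U \<and> P y = P x"
          using loc by blast
        show ?thesis using r xS by (intro exI[of _ r]) auto
      qed
    qed
  qed
qed

end
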